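(* Let $F$ be a global function field with full constant field $\mathbb{F}_q$ and rational places $P_1,\dots,P_n$; fix $m\ge1$. Let $r\ge t\ge0$ and $j_1,\dots,j_m\ge0$ be integers with $mn-(j_1+2j_2+\cdots+mj_m)\le t\le(m+1)n-(2j_1+\cdots+(m+1)j_m)$, and put $w=j_1+2j_2+\cdots+mj_m$. Then $$|\mathcal{U}(r,t;j_1,\dots,j_m)|=\binom{n}{j_m}\binom{n-j_m}{j_{m-1}}\cdots\binom{n-(j_2+\cdots+j_m)}{j_1}\binom{n-(j_1+\cdots+j_m)}{t-mn+w}\,C_{r-mn+w,\;t-mn+w}.$$
   Context: For a positive divisor $D$: $\overline D=\sum_{i=1}^n\min(m+1,v_{P_i}(D))P_i$, $j_\ell(D)=|\{i:v_{P_i}(D)=m-\ell\}|$. $\mathcal{U}(r,t;j_1,\dots,j_m)$ is the set of positive divisors $D$ with $\deg D=r$, $\deg\overline D=t$, $j_\ell(D)=j_\ell$ ($1\le\ell\le m$). For integers $a\ge b\ge0$ with $b\le n$, $C_{a,b}$ is the number of positive divisors $D$ of $F$ of degree $a$ with ${\rm supp}(\overline D)=\{Q_1,\dots,Q_b\}$ (i.e. $v_{Q_k}(D)\ge1$ for all $k$ and $v_P(D)=0$ for all other rational places $P$), for a fixed set $\{Q_1,\dots,Q_b\}$ of $b$ rational places; this number depends only on $b$, not on the chosen set. *)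

theory Defs
  imports Main
begin

(* Abstract model of the places of a global function field F:
   places have type 'p, each place p has a degree deg p >= 1,
   P i (1 <= i <= n) are the rational places (the places of degree 1).
   A divisor is an integer valued function on places with finite support. *)

definition positive_divisor :: "('p \<Rightarrow> int) \<Rightarrow> bool" where
  "positive_divisor D \<longleftrightarrow> (\<forall>p. D p \<ge> 0) \<and> finite {p. D p \<noteq> 0}"

definition div_deg :: "('p \<Rightarrow> nat) \<Rightarrow> ('p \<Rightarrow> int) \<Rightarrow> int" where
  "div_deg deg D = (\<Sum>p\<in>{p. D p \<noteq> 0}. D p * int (deg p))"

definition div_bar :: "(nat \<Rightarrow> 'p) \<Rightarrow> nat \<Rightarrow> nat \<Rightarrow> ('p \<Rightarrow> int) \<Rightarrow> ('p \<Rightarrow> int)" where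
  "div_bar P n m D = (\<lambda>p. if p \<in> P ` {1..n} then min (int m + 1) (D p) else 0)"

definition jcount :: "(nat \<Rightarrow> 'p) \<Rightarrow> nat \<Rightarrow> nat \<Rightarrow> ('p \<Rightarrow> int) \<Rightarrow> nat \<Rightarrow> nat" where
  "jcount P n m D l = card {i\<in>{1..n}. D (P i) = int m - int l}"

definition U_set :: "('p \<Rightarrow> nat) \<Rightarrow> (nat \<Rightarrow> 'p) \<Rightarrow> nat \<Rightarrow> nat \<Rightarrow> nat \<Rightarrow> nat \<Rightarrow> (nat \<Rightarrow> nat) \<Rightarrow> ('p \<Rightarrow> int) set" where
  "U_set deg P n m r t j = {D. positive_divisor D \<and> div_deg deg D = int r
      \<and> div_deg deg (div_bar P n m D) = int t
      \<and> (\<forall>l\<in>{1..m}. jcount P n m D l = j l)}"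

(* C_{a,b}: positive divisors of degree a whose bar has support exactly {P_1,...,P_b}
   (a fixed choice of b rational places) *)
definition C_num :: "('p \<Rightarrow> nat) \<Rightarrow> (nat \<Rightarrow> 'p) \<Rightarrow> nat \<Rightarrow> nat \<Rightarrow> nat \<Rightarrow> nat" where
  "C_num deg P n a b = card {D. positive_divisor D \<and> div_deg deg D = int a
      \<and> (\<forall>i\<in>{1..n}. (D (P i) \<ge> 1 \<longleftrightarrow> i \<le> b))}"

end

theory Submission
  imports Defs "HOL-Library.FuncSet"
begin


lemma count_funs:
  fixes s :: nat and c :: "nat \<Rightarrow> nat" and I :: "'a set"
  assumes "finite I"
  shows "card {f \<in> I \<rightarrow>\<^sub>E {0..s}. \<forall>v\<in>{1..s}. card {x\<in>I. f x = v} = c v}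
       = (\<Prod>v=1..s. (card I - (\<Sum>u=v+1..s. c u)) choose c v)"
  using assms
proof (induction s arbitrary: I)
  case 0
  have "{f \<in> I \<rightarrow>\<^sub>E {0..0::nat}. \<forall>v\<in>{1..0}. card {x\<in>I. f x = v} = c v} = I \<rightarrow>\<^sub>E {0}" by auto
  then show ?case using 0 by (simp add: card_PiE)
next
  case (Suc s)
  define Fs where "Fs J = {f \<in> J \<rightarrow>\<^sub>E {0..s}. \<forall>v\<in>{1..s}. card {x\<in>J. f x = v} = c v}" for J :: "'a set"
  define Xs where "Xs = {X. X \<subseteq> I \<and> card X = c (Suc s)}"
  define L where "L = {f \<in> I \<rightarrow>\<^sub>E {0..Suc s}. \<forall>v\<in>{1..Suc s}. card {x\<in>I. f x = v} = c v}"
  define \<phi> where "\<phi> f = ({x\<in>I. f x = Suc s}, restrict f (I - {x\<in>I. f x = Suc s}))" for f :: "'a \<Rightarrow> nat"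
  define \<psi> :: "'a set \<times> ('a \<Rightarrow> nat) \<Rightarrow> 'a \<Rightarrow> nat" where "\<psi> = (\<lambda>(X, g). (\<lambda>x. if x\<in>X then Suc s else g x))"
  have bij: "bij_betw \<phi> L (Sigma Xs (\<lambda>X. Fs (I - X)))"
  proof (rule bij_betw_byWitness[where f'=\<psi>])
    show "\<forall>a\<in>L. \<psi> (\<phi> a) = a"
      by (auto simp: \<psi>_def \<phi>_def L_def PiE_def extensional_def fun_eq_iff)
    show "\<forall>a\<in>Sigma Xs (\<lambda>X. Fs (I - X)). \<phi> (\<psi> a) = a"
    proof
      fix a assume a: "a \<in> Sigma Xs (\<lambda>X. Fs (I - X))"
      then obtain X g where ag: "a = (X, g)" "X \<subseteq> I" "g \<in> (I - X) \<rightarrow>\<^sub>E {0..s}"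
        by (auto simp: Xs_def Fs_def)
      have X: "{x\<in>I. \<psi> (X,g) x = Suc s} = X" using ag by (auto simp: \<psi>_def PiE_def Pi_def)
      show "\<phi> (\<psi> a) = a" unfolding \<phi>_def ag(1) X using ag
        by (auto simp: \<psi>_def PiE_def extensional_def fun_eq_iff)
    qed
    show "\<phi> ` L \<subseteq> Sigma Xs (\<lambda>X. Fs (I - X))"
    proof
      fix y assume "y \<in> \<phi> ` L"
      then obtain f where f: "f \<in> L" "y = \<phi> f" by auto
      define X where "X = {x\<in>I. f x = Suc s}"
      have "X \<in> Xs" using f by (auto simp: X_def Xs_def L_def)
      moreover have "restrict f (I - X) \<in> Fs (I - X)"
      proof -
        have "restrict f (I - X) \<in> (I - X) \<rightarrow>\<^sub>E {0..s}"
          using f by (auto simp: X_def L_def PiE_def Pi_def le_Suc_eq)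
        moreover have "\<forall>v\<in>{1..s}. card {x\<in>I - X. restrict f (I - X) x = v} = c v"
        proof
          fix v assume v: "v \<in> {1..s}"
          have "{x\<in>I - X. restrict f (I - X) x = v} = {x\<in>I. f x = v}" using v by (auto simp: X_def)
          then show "card {x\<in>I - X. restrict f (I - X) x = v} = c v" using f v by (auto simp: L_def)
        qed
        ultimately show ?thesis by (simp add: Fs_def)
      qed
      ultimately show "y \<in> Sigma Xs (\<lambda>X. Fs (I - X))" using f by (simp add: \<phi>_def X_def)
    qed
    show "\<psi> ` Sigma Xs (\<lambda>X. Fs (I - X)) \<subseteq> L"
    proof
      fix y assume "y \<in> \<psi> ` Sigma Xs (\<lambda>X. Fs (I - X))"
      then obtain X g where ag: "y = \<psi> (X, g)" "X \<subseteq> I" "card X = c (Suc s)" "g \<in> (I - X) \<rightarrow>\<^sub>E {0..s}"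
         "\<forall>v\<in>{1..s}. card {x\<in>I - X. g x = v} = c v"
        by (auto simp: Xs_def Fs_def)
      have "y \<in> I \<rightarrow>\<^sub>E {0..Suc s}" using ag by (auto simp: \<psi>_def PiE_def Pi_def extensional_def)
      moreover have "card {x\<in>I. y x = v} = c v" if v: "v \<in> {1..Suc s}" for v
      proof (cases "v = Suc s")
        case True
        have "{x\<in>I. y x = v} = X" using ag True by (auto simp: \<psi>_def PiE_def Pi_def)
        then show ?thesis using ag True by simp
      next
        case False
        have "{x\<in>I. y x = v} = {x\<in>I - X. g x = v}" using ag False by (auto simp: \<psi>_def)
        then show ?thesis using ag False v by simp
      qed
      ultimately show "y \<in> L" by (simp add: L_def)
    qed
  qed
  have finXs: "finite Xs" using Suc.prems by (simp add: Xs_def)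
  have finFs: "finite (Fs J)" if "finite J" for J
    by (rule finite_subset[of _ "J \<rightarrow>\<^sub>E {0..s}"]) (auto simp: Fs_def intro: finite_PiE that)
  define K where "K = (\<Prod>v=1..s. (card I - c (Suc s) - (\<Sum>u=v+1..s. c u)) choose c v)"
  have "card L = card (Sigma Xs (\<lambda>X. Fs (I - X)))" using bij by (rule bij_betw_same_card)
  also have "\<dots> = (\<Sum>X\<in>Xs. card (Fs (I - X)))" using finXs finFs Suc.prems by simp
  also have "\<dots> = (\<Sum>X\<in>Xs. K)"
  proof (rule sum.cong)
    fix X assume "X \<in> Xs"
    then have "card (I - X) = card I - c (Suc s)" using Suc.prems
      by (auto simp: Xs_def card_Diff_subset finite_subset)
    then show "card (Fs (I - X)) = K" unfolding Fs_def K_def using Suc.IH[of "I - X"] Suc.prems by simp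
  qed simp
  also have "\<dots> = (card I choose c (Suc s)) * K" using n_subsets[OF Suc.prems] by (simp add: Xs_def)
  also have "\<dots> = (\<Prod>v=1..Suc s. (card I - (\<Sum>u=v+1..Suc s. c u)) choose c v)"
  proof -
    have "(\<Prod>v=1..s. (card I - (\<Sum>u=v+1..Suc s. c u)) choose c v) = K"
      unfolding K_def
    proof (rule prod.cong)
      fix v assume "v \<in> {1..s}"
      then have "(\<Sum>u=v+1..Suc s. c u) = (\<Sum>u=v+1..s. c u) + c (Suc s)" by (simp add: sum.cl_ivl_Suc)
      then show "(card I - (\<Sum>u=v+1..Suc s. c u)) choose c v = (card I - c (Suc s) - (\<Sum>u=v+1..s. c u)) choose c v"
        by (simp add: diff_diff_add add.commute)
    qed simp
    then show ?thesis by (simp add: prod.cl_ivl_Suc mult.commute)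
  qed
  finally show ?case by (simp add: L_def)
qed



definition rest_part :: "('p \<Rightarrow> nat) \<Rightarrow> (nat \<Rightarrow> 'p) \<Rightarrow> nat \<Rightarrow> ('p \<Rightarrow> int) \<Rightarrow> int" where
  "rest_part deg P n D = (\<Sum>p\<in>{p. D p \<noteq> 0} - P ` {1..n}. D p * int (deg p))"

lemma L1:
  assumes fin: "finite {p. D p \<noteq> 0}" and inj: "inj_on P {1..n}" and deg1: "\<forall>i\<in>{1..n}. deg (P i) = 1"
  shows "div_deg deg D = (\<Sum>i=1..n. D (P i)) + rest_part deg P n D"
proof -
  let ?S = "{p. D p \<noteq> 0}" let ?R = "P ` {1..n}"
  have "div_deg deg D = (\<Sum>p\<in>?S \<inter> ?R. D p * int (deg p)) + (\<Sum>p\<in>?S - ?R. D p * int (deg p))"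
    unfolding div_deg_def using fin by (rule sum.Int_Diff)
  also have "(\<Sum>p\<in>?S \<inter> ?R. D p * int (deg p)) = (\<Sum>p\<in>?R. D p * int (deg p))"
    by (rule sum.mono_neutral_left) auto
  also have "\<dots> = (\<Sum>i=1..n. D (P i) * int (deg (P i)))" using sum.reindex[OF inj] by simp
  also have "\<dots> = (\<Sum>i=1..n. D (P i))" using deg1 by (intro sum.cong) auto
  finally show ?thesis by (simp add: rest_part_def)
qed

lemma L2:
  assumes "\<forall>p. p \<notin> P ` {1..n} \<longrightarrow> D p = D' p"
  shows "rest_part deg P n D = rest_part deg P n D'"
proof -
  have "{p. D p \<noteq> 0} - P ` {1..n} = {p. D' p \<noteq> 0} - P ` {1..n}" using assms by auto
  then show ?thesis unfolding rest_part_def using assms by (auto intro!: sum.cong)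
qed

lemma L3:
  assumes inj: "inj_on P {1..n}" and deg1: "\<forall>i\<in>{1..n}. deg (P i) = 1"
  shows "div_deg deg (div_bar P n m D) = (\<Sum>i=1..n. min (int m + 1) (D (P i)))"
proof -
  have fin: "finite {p. div_bar P n m D p \<noteq> 0}"
    by (rule finite_subset[of _ "P ` {1..n}"]) (auto simp: div_bar_def split: if_splits)
  have r: "rest_part deg P n (div_bar P n m D) = 0"
    unfolding rest_part_def by (rule sum.neutral) (auto simp: div_bar_def)
  show ?thesis using L1[OF fin inj deg1] r by (simp add: div_bar_def)
qed

lemma fin_divs:
  assumes deg_pos: "\<forall>p. deg p \<ge> (1::nat)" and fin_deg: "\<forall>d. finite {p. deg p = d}"
  shows "finite {E. positive_divisor E \<and> div_deg deg E = int a}"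
proof -
  let ?Q = "{p. deg p \<le> a}"
  let ?X = "{E. positive_divisor E \<and> div_deg deg E = int a}"
  have "?Q = (\<Union>d\<in>{..a}. {p. deg p = d})" by auto
  then have fQ: "finite ?Q" using fin_deg by simp
  have key: "deg p \<le> a \<and> E p \<le> int a" if E: "E \<in> ?X" and p: "E p \<noteq> 0" for E p
  proof -
    have pos: "\<forall>p. E p \<ge> 0" "finite {p. E p \<noteq> 0}" using E by (auto simp: positive_divisor_def)
    have "E p * int (deg p) \<le> (\<Sum>q\<in>{p. E p \<noteq> 0}. E q * int (deg q))"
      by (rule member_le_sum) (use p pos in auto)
    then have le: "E p * int (deg p) \<le> int a" using E by (simp add: div_deg_def)
    have "E p \<ge> 1" using pos(1)[rule_format, of p] p by linarith
    moreover have "int (deg p) \<ge> 1" using deg_pos by simp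
    ultimately have "int (deg p) \<le> E p * int (deg p)" "E p \<le> E p * int (deg p)"
      by (simp_all add: mult_le_cancel_right1 mult_le_cancel_left1)
    then show ?thesis using le by linarith
  qed
  have inj: "inj_on (\<lambda>E. restrict E ?Q) ?X"
  proof (rule inj_onI)
    fix E E' assume E: "E \<in> ?X" and E': "E' \<in> ?X" and eq: "restrict E ?Q = restrict E' ?Q"
    show "E = E'"
    proof
      fix p show "E p = E' p"
      proof (cases "deg p \<le> a")
        case True then show ?thesis using eq by (metis mem_Collect_eq restrict_apply')
      next
        case False
        have "E p = 0" using key[OF E, of p] False by linarith
        moreover have "E' p = 0" using key[OF E', of p] False by linarith
        ultimately show ?thesis by simp
      qed
    qed
  qed
  have "(\<lambda>E. restrict E ?Q) ` ?X \<subseteq> PiE ?Q (\<lambda>_. {0..int a})"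
  proof
    fix F assume "F \<in> (\<lambda>E. restrict E ?Q) ` ?X"
    then obtain E where E: "E \<in> ?X" "F = restrict E ?Q" by auto
    have "\<forall>p. E p \<ge> 0" using E by (auto simp: positive_divisor_def)
    then have "E p \<in> {0..int a}" for p using key[OF E(1), of p] by (cases "E p = 0") auto
    then show "F \<in> PiE ?Q (\<lambda>_. {0..int a})" unfolding E(2) by (auto simp: PiE_iff)
  qed
  then have "finite ((\<lambda>E. restrict E ?Q) ` ?X)" by (rule finite_subset) (intro finite_PiE fQ, simp)
  then show ?thesis using inj by (rule finite_imageD)
qed

definition theta :: "(nat \<Rightarrow> 'p) \<Rightarrow> nat \<Rightarrow> (nat \<Rightarrow> nat) \<Rightarrow> ('p \<Rightarrow> int) \<Rightarrow> ('p \<Rightarrow> int)" where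
  "theta P n h E = (\<lambda>p. if p \<in> P ` {1..n} then E (P (h (the_inv_into {1..n} P p))) else E p)"

lemma theta_at:
  assumes "inj_on P {1..n}" "i \<in> {1..n}"
  shows "theta P n h E (P i) = E (P (h i))"
  using assms by (simp add: theta_def the_inv_into_f_f)

lemma theta_props:
  assumes inj: "inj_on P {1..n}" and deg1: "\<forall>i\<in>{1..n}. deg (P i) = 1"
    and h: "bij_betw h {1..n} {1..n}" and E: "positive_divisor E"
  shows "positive_divisor (theta P n h E)" "div_deg deg (theta P n h E) = div_deg deg E"
proof -
  have finE: "finite {p. E p \<noteq> 0}" using E by (simp add: positive_divisor_def)
  have fin: "finite {p. theta P n h E p \<noteq> 0}"
    by (rule finite_subset[of _ "{p. E p \<noteq> 0} \<union> P ` {1..n}"]) (use finE in \<open>auto simp: theta_def\<close>)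
  show "positive_divisor (theta P n h E)" using E fin by (auto simp: positive_divisor_def theta_def)
  have "(\<Sum>i=1..n. theta P n h E (P i)) = (\<Sum>i=1..n. E (P (h i)))"
    using inj by (intro sum.cong) (auto simp: theta_at)
  also have "\<dots> = (\<Sum>i=1..n. E (P i))" using sum.reindex_bij_betw[OF h, of "\<lambda>i. E (P i)"] by simp
  finally have s: "(\<Sum>i=1..n. theta P n h E (P i)) = (\<Sum>i=1..n. E (P i))" .
  have "rest_part deg P n (theta P n h E) = rest_part deg P n E"
    by (rule L2) (simp add: theta_def)
  then show "div_deg deg (theta P n h E) = div_deg deg E"
    using L1[OF fin inj deg1] L1[OF finE inj deg1] s by simp
qed

lemma perm_G:
  assumes inj: "inj_on P {1..n}" and deg1: "\<forall>i\<in>{1..n}. deg (P i) = 1" and T: "T \<subseteq> {1..n}"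
  shows "card {E. positive_divisor E \<and> div_deg deg E = int a \<and> (\<forall>i\<in>{1..n}. 1 \<le> E (P i) \<longleftrightarrow> i \<in> T)}
       = C_num deg P n a (card T)"
proof -
  define b where "b = card T"
  have bn: "b \<le> n" using card_mono[OF _ T] unfolding b_def by simp
  have fT: "finite T" using T by (rule finite_subset) simp
  have "\<exists>h. bij_betw h T {1..b}"
    by (rule finite_same_card_bij[OF fT]) (simp_all add: b_def)
  then obtain h1 where h1: "bij_betw h1 T {1..b}" by blast
  have "card ({1..n} - T) = card ({1..n} - {1..b})"
    using T bn by (simp add: card_Diff_subset finite_subset b_def)
  then have "\<exists>h. bij_betw h ({1..n} - T) ({1..n} - {1..b})"
    by (intro finite_same_card_bij) simp_all
  then obtain h2 where h2: "bij_betw h2 ({1..n} - T) ({1..n} - {1..b})" by blast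
  define h where "h = (\<lambda>x. if x \<in> T then h1 x else h2 x)"
  have "bij_betw h (T \<union> ({1..n} - T)) ({1..b} \<union> ({1..n} - {1..b}))"
    unfolding h_def by (rule bij_betw_disjoint_Un[OF h1 h2]) auto
  moreover have "T \<union> ({1..n} - T) = {1..n}" "{1..b} \<union> ({1..n} - {1..b}) = {1..n}" using T bn by auto
  ultimately have h: "bij_betw h {1..n} {1..n}" by simp
  have hT: "h i \<le> b \<longleftrightarrow> i \<in> T" if "i \<in> {1..n}" for i
  proof (cases "i \<in> T")
    case True then show ?thesis using h1 by (auto simp: h_def bij_betw_def)
  next
    case False then have "h2 i \<in> {1..n} - {1..b}" using h2 that by (auto simp: bij_betw_def)
    then show ?thesis using False by (auto simp: h_def)
  qed
  define hi where "hi = inv_into {1..n} h"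
  have hi: "bij_betw hi {1..n} {1..n}" unfolding hi_def using h by (rule bij_betw_inv_into)
  have hhi: "h (hi i) = i" if "i \<in> {1..n}" for i
    unfolding hi_def using h that by (meson bij_betw_inv_into_right)
  have hih: "hi (h i) = i" if "i \<in> {1..n}" for i
    unfolding hi_def using h that by (meson bij_betw_inv_into_left)
  have hin: "hi i \<in> {1..n}" if "i \<in> {1..n}" for i using hi that by (meson bij_betwE)
  define CS where "CS = {D. positive_divisor D \<and> div_deg deg D = int a \<and> (\<forall>i\<in>{1..n}. (D (P i) \<ge> 1 \<longleftrightarrow> i \<le> b))}"
  define GS where "GS = {E. positive_divisor E \<and> div_deg deg E = int a \<and> (\<forall>i\<in>{1..n}. 1 \<le> E (P i) \<longleftrightarrow> i \<in> T)}"
  have hn: "h i \<in> {1..n}" if "i \<in> {1..n}" for i using h that by (meson bij_betwE)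
  have tt: "theta P n hi (theta P n h E) = E" "theta P n h (theta P n hi E) = E" for E
  proof -
    show "theta P n hi (theta P n h E) = E"
    proof
      fix p show "theta P n hi (theta P n h E) p = E p"
      proof (cases "p \<in> P ` {1..n}")
        case True
        then obtain i where i: "i \<in> {1..n}" "p = P i" by auto
        show ?thesis using i hin[OF i(1)] by (simp add: theta_at[OF inj] hhi)
      next
        case False then show ?thesis by (simp add: theta_def)
      qed
    qed
    show "theta P n h (theta P n hi E) = E"
    proof
      fix p show "theta P n h (theta P n hi E) p = E p"
      proof (cases "p \<in> P ` {1..n}")
        case True
        then obtain i where i: "i \<in> {1..n}" "p = P i" by auto
        show ?thesis using i hn[OF i(1)] by (simp add: theta_at[OF inj] hih)
      next
        case False then show ?thesis by (simp add: theta_def)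
      qed
    qed
  qed
  have "bij_betw (theta P n h) CS GS"
  proof (rule bij_betw_byWitness[where f' = "theta P n hi"])
    show "\<forall>a\<in>CS. theta P n hi (theta P n h a) = a" using tt by simp
    show "\<forall>a\<in>GS. theta P n h (theta P n hi a) = a" using tt by simp
    show "theta P n h ` CS \<subseteq> GS"
    proof
      fix E assume "E \<in> theta P n h ` CS"
      then obtain E0 where E0: "E0 \<in> CS" "E = theta P n h E0" by auto
      have "1 \<le> E (P i) \<longleftrightarrow> i \<in> T" if "i \<in> {1..n}" for i
      proof -
        have e: "E (P i) = E0 (P (h i))" using E0(2) that by (simp add: theta_at[OF inj])
        have c: "1 \<le> E0 (P (h i)) \<longleftrightarrow> h i \<le> b" using E0(1) hn[OF that] unfolding CS_def by blast
        show ?thesis using e c hT[OF that] by simp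
      qed
      note cond = this
      have "positive_divisor E0" "div_deg deg E0 = int a" using E0(1) unfolding CS_def by auto
      then have "positive_divisor E" "div_deg deg E = int a" using theta_props[OF inj deg1 h, of E0] E0(2) by auto
      then show "E \<in> GS" unfolding GS_def using cond by blast
    qed
    show "theta P n hi ` GS \<subseteq> CS"
    proof
      fix E assume "E \<in> theta P n hi ` GS"
      then obtain E0 where E0: "E0 \<in> GS" "E = theta P n hi E0" by auto
      have "1 \<le> E (P i) \<longleftrightarrow> i \<le> b" if "i \<in> {1..n}" for i
      proof -
        have e: "E (P i) = E0 (P (hi i))" using E0(2) that by (simp add: theta_at[OF inj])
        have c: "1 \<le> E0 (P (hi i)) \<longleftrightarrow> hi i \<in> T" using E0(1) hin[OF that] unfolding GS_def by blast
        show ?thesis using e c hT[OF hin[OF that]] hhi[OF that] by simp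
      qed
      note cond = this
      have "positive_divisor E0" "div_deg deg E0 = int a" using E0(1) unfolding GS_def by auto
      then have "positive_divisor E" "div_deg deg E = int a" using theta_props[OF inj deg1 hi, of E0] E0(2) by auto
      then show "E \<in> CS" unfolding CS_def using cond by blast
    qed
  qed
  then have "card GS = card CS" by (metis bij_betw_same_card)
  then show ?thesis by (simp add: GS_def CS_def C_num_def b_def)
qed



definition lab :: "nat \<Rightarrow> int \<Rightarrow> nat" where
  "lab m x = (if x \<ge> int m + 1 then 1 else if x = int m then 0 else nat (int m - x) + 1)"
definition gv :: "nat \<Rightarrow> nat \<Rightarrow> int" where
  "gv m v = (if v = 0 then int m else if v = 1 then int m + 1 else int m + 1 - int v)"
definition vl :: "nat \<Rightarrow> nat \<Rightarrow> int \<Rightarrow> int" where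
  "vl m v e = (if v = 1 then e + int m else gv m v)"

lemma lab_g: "0 \<le> x \<Longrightarrow> gv m (lab m x) = min (int m + 1) x"
  by (auto simp: lab_def gv_def)
lemma lab_eq: "0 \<le> x \<Longrightarrow> 1 \<le> l \<Longrightarrow> lab m x = l + 1 \<longleftrightarrow> x = int m - int l"
  unfolding lab_def by (cases "x \<ge> int m + 1"; cases "x = int m") auto
lemma lab_1: "0 \<le> x \<Longrightarrow> lab m x = 1 \<longleftrightarrow> x \<ge> int m + 1"
  by (auto simp: lab_def)
lemma lab_le: "0 \<le> x \<Longrightarrow> lab m x \<le> m + 1"
  by (auto simp: lab_def)
lemma decomp: "0 \<le> x \<Longrightarrow> x = max 0 (x - int m) + min (int m + 1) x - (if x \<ge> int m + 1 then 1 else 0)"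
  by auto
lemma vl_lab: "0 \<le> x \<Longrightarrow> vl m (lab m x) (max 0 (x - int m)) = x"
  by (auto simp: lab_def vl_def gv_def)
lemma lab_vl:
  assumes "v \<le> m + 1" "0 \<le> e" "1 \<le> e \<longleftrightarrow> v = 1"
  shows "lab m (vl m v e) = v" "max 0 (vl m v e - int m) = e" "0 \<le> vl m v e"
  using assms by (auto simp: lab_def vl_def gv_def)

lemma gv_expand:
  assumes "v \<le> m + 1"
  shows "gv m v = int m + (if v = 1 then 1 else 0) - (\<Sum>l=1..m. if v = l + 1 then int l else 0)"
proof (cases "2 \<le> v")
  case True
  have "(\<Sum>l=1..m. if v = l + 1 then int l else 0) = (\<Sum>l=1..m. if l = v - 1 then int l else 0)"
    using True by (intro sum.cong) auto
  also have "\<dots> = int (v - 1)" using True assms by (simp add: sum.delta, linarith)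
  finally show ?thesis using True by (simp add: gv_def)
next
  case False
  have "(\<Sum>l=1..m. if v = l + 1 then int l else 0) = 0"
    using False by (intro sum.neutral) auto
  then show ?thesis using False by (auto simp: gv_def)
qed

lemma sum_ind: "finite I \<Longrightarrow> (\<Sum>i\<in>I. if Q i then (x::int) else 0) = x * int (card {i\<in>I. Q i})"
  by (simp add: sum.inter_filter[symmetric])

lemma sumg:
  assumes "finite I" "\<forall>i\<in>I. f i \<le> m + 1"
  shows "(\<Sum>i\<in>I. gv m (f i)) = int m * int (card I) + int (card {i\<in>I. f i = 1})
           - (\<Sum>l=1..m. int l * int (card {i\<in>I. f i = l + 1}))"
proof -
  have "(\<Sum>i\<in>I. gv m (f i)) = (\<Sum>i\<in>I. int m + (if f i = 1 then 1 else 0) - (\<Sum>l=1..m. if f i = l + 1 then int l else 0))"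
    using assms(2) by (intro sum.cong) (auto simp: gv_expand)
  also have "\<dots> = (\<Sum>i\<in>I. int m) + (\<Sum>i\<in>I. if f i = 1 then 1 else 0) - (\<Sum>i\<in>I. \<Sum>l=1..m. if f i = l + 1 then int l else 0)"
    by (simp add: sum.distrib sum_subtractf)
  also have "(\<Sum>i\<in>I. \<Sum>l=1..m. if f i = l + 1 then int l else 0) = (\<Sum>l=1..m. \<Sum>i\<in>I. if f i = l + 1 then int l else 0)"
    by (rule sum.swap)
  also have "\<dots> = (\<Sum>l=1..m. int l * int (card {i\<in>I. f i = l + 1}))"
    using assms(1) by (intro sum.cong) (auto simp: sum_ind)
  finally show ?thesis using sum_ind[OF assms(1), of "\<lambda>i. f i = 1" 1] by (simp add: mult.commute)
qed



definition prof :: "(nat \<Rightarrow> 'p) \<Rightarrow> nat \<Rightarrow> nat \<Rightarrow> ('p \<Rightarrow> int) \<Rightarrow> nat \<Rightarrow> nat" where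
  "prof P n m D = restrict (\<lambda>i. lab m (D (P i))) {1..n}"
definition red :: "(nat \<Rightarrow> 'p) \<Rightarrow> nat \<Rightarrow> nat \<Rightarrow> ('p \<Rightarrow> int) \<Rightarrow> 'p \<Rightarrow> int" where
  "red P n m D = (\<lambda>p. if p \<in> P ` {1..n} then max 0 (D p - int m) else D p)"
definition psi :: "(nat \<Rightarrow> 'p) \<Rightarrow> nat \<Rightarrow> nat \<Rightarrow> (nat \<Rightarrow> nat) \<times> ('p \<Rightarrow> int) \<Rightarrow> 'p \<Rightarrow> int" where
  "psi P n m = (\<lambda>(f, E). \<lambda>p. if p \<in> P ` {1..n} then vl m (f (the_inv_into {1..n} P p)) (E p) else E p)"

lemma psi_at: "inj_on P {1..n} \<Longrightarrow> i \<in> {1..n} \<Longrightarrow> psi P n m (f, E) (P i) = vl m (f i) (E (P i))"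
  by (simp add: psi_def the_inv_into_f_f)

lemma red_at: "i \<in> {1..n} \<Longrightarrow> red P n m D (P i) = max 0 (D (P i) - int m)"
  by (simp add: red_def)

lemma prof_at: "i \<in> {1..n} \<Longrightarrow> prof P n m D i = lab m (D (P i))"
  by (simp add: prof_def)

lemma red_pos: "positive_divisor D \<Longrightarrow> positive_divisor (red P n m D)"
proof -
  assume D: "positive_divisor D"
  have "{p. red P n m D p \<noteq> 0} \<subseteq> {p. D p \<noteq> 0}" by (auto simp: red_def split: if_splits)
  moreover have "finite {p. D p \<noteq> 0}" using D by (simp add: positive_divisor_def)
  ultimately have "finite {p. red P n m D p \<noteq> 0}" by (rule finite_subset)
  moreover have "\<forall>p. red P n m D p \<ge> 0" using D by (simp add: red_def positive_divisor_def)
  ultimately show ?thesis unfolding positive_divisor_def by simp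
qed

lemma red_1: "positive_divisor D \<Longrightarrow> i \<in> {1..n} \<Longrightarrow> (1 \<le> red P n m D (P i)) \<longleftrightarrow> prof P n m D i = 1"
proof -
  assume D: "positive_divisor D" and i: "i \<in> {1..n}"
  have x: "D (P i) \<ge> 0" using D by (simp add: positive_divisor_def)
  have "1 \<le> max 0 (D (P i) - int m) \<longleftrightarrow> D (P i) \<ge> int m + 1" by auto
  moreover have "lab m (D (P i)) = 1 \<longleftrightarrow> D (P i) \<ge> int m + 1" by (rule lab_1[OF x])
  ultimately show ?thesis using i by (simp add: red_at prof_at)
qed

lemma prof_Pi: "positive_divisor D \<Longrightarrow> prof P n m D \<in> {1..n} \<rightarrow>\<^sub>E {0..m+1}"
  using lab_le by (auto simp: prof_def positive_divisor_def)

lemma lab_le': "0 \<le> x \<Longrightarrow> lab m x \<le> Suc m" using lab_le by simp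

lemma bar_deg:
  assumes inj: "inj_on P {1..n}" and deg1: "\<forall>i\<in>{1..n}. deg (P i) = 1" and D: "positive_divisor D"
  shows "div_deg deg (div_bar P n m D) = int m * int n + int (card {i\<in>{1..n}. prof P n m D i = 1})
           - (\<Sum>l=1..m. int l * int (card {i\<in>{1..n}. prof P n m D i = l + 1}))"
proof -
  have "div_deg deg (div_bar P n m D) = (\<Sum>i=1..n. min (int m + 1) (D (P i)))" by (rule L3[OF inj deg1])
  also have "\<dots> = (\<Sum>i=1..n. gv m (prof P n m D i))"
    using D by (intro sum.cong) (auto simp: prof_at lab_g positive_divisor_def)
  also have "\<dots> = int m * int (card {1..n}) + int (card {i\<in>{1..n}. prof P n m D i = 1})
           - (\<Sum>l=1..m. int l * int (card {i\<in>{1..n}. prof P n m D i = l + 1}))"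
    by (rule sumg) (use D in \<open>auto simp: prof_at positive_divisor_def intro: lab_le'\<close>)
  finally show ?thesis by simp
qed

lemma jc:
  assumes D: "positive_divisor D" and l: "l \<in> {1..m}"
  shows "jcount P n m D l = card {i\<in>{1..n}. prof P n m D i = l + 1}"
proof -
  have "{i\<in>{1..n}. D (P i) = int m - int l} = {i\<in>{1..n}. prof P n m D i = l + 1}"
  proof (rule Collect_cong)
    fix i
    show "(i \<in> {1..n} \<and> D (P i) = int m - int l) = (i \<in> {1..n} \<and> prof P n m D i = l + 1)"
    proof (cases "i \<in> {1..n}")
      case True
      have "D (P i) \<ge> 0" using D by (simp add: positive_divisor_def)
      then show ?thesis using True l lab_eq[of "D (P i)" l m] by (simp add: prof_at)
    qed auto
  qed
  then show ?thesis by (simp add: jcount_def)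
qed

lemma deg_split:
  assumes inj: "inj_on P {1..n}" and deg1: "\<forall>i\<in>{1..n}. deg (P i) = 1" and D: "positive_divisor D"
  shows "div_deg deg D = div_deg deg (red P n m D) + div_deg deg (div_bar P n m D)
           - int (card {i\<in>{1..n}. prof P n m D i = 1})"
proof -
  have finD: "finite {p. D p \<noteq> 0}" and nn: "\<forall>p. D p \<ge> 0" using D by (auto simp: positive_divisor_def)
  have finR: "finite {p. red P n m D p \<noteq> 0}" using red_pos[OF D] by (auto simp: positive_divisor_def)
  have rest: "rest_part deg P n (red P n m D) = rest_part deg P n D"
    by (rule L2) (simp add: red_def)
  have "(\<Sum>i=1..n. D (P i)) = (\<Sum>i=1..n. red P n m D (P i) + min (int m + 1) (D (P i))
             - (if prof P n m D i = 1 then 1 else 0))"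
  proof (rule sum.cong)
    fix i assume i: "i \<in> {1..n}"
    have "prof P n m D i = 1 \<longleftrightarrow> D (P i) \<ge> int m + 1" using lab_1[of "D (P i)" m] nn i by (simp add: prof_at)
    then show "D (P i) = red P n m D (P i) + min (int m + 1) (D (P i)) - (if prof P n m D i = 1 then 1 else 0)"
      using decomp[of "D (P i)" m] nn i by (simp add: red_at)
  qed simp
  also have "\<dots> = (\<Sum>i=1..n. red P n m D (P i)) + (\<Sum>i=1..n. min (int m + 1) (D (P i)))
             - (\<Sum>i=1..n. if prof P n m D i = 1 then 1 else 0)"
    by (simp add: sum.distrib sum_subtractf)
  also have "(\<Sum>i=1..n. if prof P n m D i = 1 then (1::int) else 0) = int (card {i\<in>{1..n}. prof P n m D i = 1})"
    using sum_ind[of "{1..n}" "\<lambda>i. prof P n m D i = 1" 1] by simp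
  finally have s: "(\<Sum>i=1..n. D (P i)) = (\<Sum>i=1..n. red P n m D (P i)) + (\<Sum>i=1..n. min (int m + 1) (D (P i)))
             - int (card {i\<in>{1..n}. prof P n m D i = 1})" .
  show ?thesis using L1[OF finD inj deg1] L1[OF finR inj deg1] L3[OF inj deg1, of m D] rest s by simp
qed



theorem lemma3p5:
  fixes deg :: "'p \<Rightarrow> nat" and P :: "nat \<Rightarrow> 'p" and n m r t :: nat and j :: "nat \<Rightarrow> nat"
  assumes places_inj: "inj_on P {1..n}"
    and deg_pos: "\<forall>p. deg p \<ge> 1"
    and rational: "{p. deg p = 1} = P ` {1..n}"
    and fin_deg: "\<forall>d. finite {p. deg p = d}"
    and m_pos: "m \<ge> 1"
    and rt: "t \<le> r"
    and lower: "m * n \<le> t + (\<Sum>l=1..m. l * j l)"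
    and upper: "t + (\<Sum>l=1..m. (l + 1) * j l) \<le> (m + 1) * n"
  shows "card (U_set deg P n m r t j) =
    (\<Prod>l=1..m. ((n - (\<Sum>k=l+1..m. j k)) choose (j l)))
    * ((n - (\<Sum>k=1..m. j k)) choose ((t + (\<Sum>l=1..m. l * j l)) - m * n))
    * C_num deg P n (r + (\<Sum>l=1..m. l * j l) - m * n) (t + (\<Sum>l=1..m. l * j l) - m * n)"
proof -
  note inj = places_inj
  have deg1: "\<forall>i\<in>{1..n}. deg (P i) = 1"
  proof
    fix i assume "i \<in> {1..n}"
    then have "P i \<in> {p. deg p = 1}" unfolding rational by blast
    then show "deg (P i) = 1" by simp
  qed
  define w where "w = (\<Sum>l=1..m. l * j l)"
  define K where "K = t + w - m * n"
  define a where "a = r + w - m * n"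
  have lw: "m * n \<le> t + w" using lower by (simp add: w_def)
  have Kint: "int K = int t + int w - int m * int n" using lw by (simp add: K_def of_nat_diff)
  have aint: "int a = int r + int w - int m * int n" using lw rt by (simp add: a_def of_nat_diff)
  have wint: "(\<Sum>l=1..m. int l * int (j l)) = int w" by (simp add: w_def)
  define c where "c v = (if v = 1 then K else j (v - 1))" for v
  define F where "F = {f \<in> {1..n} \<rightarrow>\<^sub>E {0..m+1}. \<forall>v\<in>{1..m+1}. card {i\<in>{1..n}. f i = v} = c v}"
  define G where "G f = {E. positive_divisor E \<and> div_deg deg E = int a \<and> (\<forall>i\<in>{1..n}. 1 \<le> E (P i) \<longleftrightarrow> i \<in> {i\<in>{1..n}. f i = 1})}" for f :: "nat \<Rightarrow> nat"
  define U where "U = U_set deg P n m r t j"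
  define \<Phi> where "\<Phi> D = (prof P n m D, red P n m D)" for D :: "'p \<Rightarrow> int"
  have cnt: "(\<Sum>l=1..m. int l * int (card {i\<in>{1..n}. f i = l + 1})) = int w"
    if "\<forall>l\<in>{1..m}. card {i\<in>{1..n}. f i = l + 1} = j l" for f :: "nat \<Rightarrow> nat"
    using that wint by (metis (no_types, lifting) sum.cong)
  have right: "prof P n m (psi P n m (f, E)) = f \<and> red P n m (psi P n m (f, E)) = E"
    if fE: "(f, E) \<in> Sigma F G" for f E
  proof -
    have f: "f \<in> {1..n} \<rightarrow>\<^sub>E {0..m+1}" using fE by (simp add: F_def)
    have E: "positive_divisor E" "\<forall>i\<in>{1..n}. 1 \<le> E (P i) \<longleftrightarrow> f i = 1" using fE by (auto simp: G_def)
    have fi: "f i \<le> m + 1" if "i \<in> {1..n}" for i using f that by (auto simp: PiE_iff)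
    have Ei: "0 \<le> E p" for p using E(1) by (simp add: positive_divisor_def)
    have "prof P n m (psi P n m (f, E)) = f"
    proof
      fix i show "prof P n m (psi P n m (f, E)) i = f i"
      proof (cases "i \<in> {1..n}")
        case True
        then show ?thesis using lab_vl(1)[OF fi[OF True] Ei, of "P i"] E(2) True
          by (simp add: prof_at psi_at[OF inj])
      next
        case False
        have "f i = undefined" using f False by (auto simp: PiE_iff extensional_def)
        then show ?thesis using False by (auto simp: prof_def)
      qed
    qed
    moreover have "red P n m (psi P n m (f, E)) = E"
    proof
      fix p show "red P n m (psi P n m (f, E)) p = E p"
      proof (cases "p \<in> P ` {1..n}")
        case True
        then obtain i where i: "i \<in> {1..n}" "p = P i" by auto
        then show ?thesis using lab_vl(2)[OF fi[OF i(1)] Ei, of "P i"] E(2)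
          by (simp add: red_at psi_at[OF inj])
      next
        case False
        then show ?thesis by (simp add: red_def psi_def)
      qed
    qed
    ultimately show ?thesis by simp
  qed
  have psi_pos: "positive_divisor (psi P n m (f, E))" if fE: "(f, E) \<in> Sigma F G" for f E
  proof -
    have f: "f \<in> {1..n} \<rightarrow>\<^sub>E {0..m+1}" using fE by (simp add: F_def)
    have E: "positive_divisor E" "\<forall>i\<in>{1..n}. 1 \<le> E (P i) \<longleftrightarrow> f i = 1" using fE by (auto simp: G_def)
    have fi: "f i \<le> m + 1" if "i \<in> {1..n}" for i using f that by (auto simp: PiE_iff)
    have Ei: "0 \<le> E p" for p using E(1) by (simp add: positive_divisor_def)
    have nn: "0 \<le> psi P n m (f, E) p" for p
    proof (cases "p \<in> P ` {1..n}")
      case True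
      then obtain i where i: "i \<in> {1..n}" "p = P i" by auto
      then show ?thesis using lab_vl(3)[OF fi[OF i(1)] Ei, of "P i"] E(2)
        by (simp add: psi_at[OF inj])
    next
      case False
      then show ?thesis using Ei by (simp add: psi_def)
    qed
    have "{p. psi P n m (f, E) p \<noteq> 0} \<subseteq> {p. E p \<noteq> 0} \<union> P ` {1..n}"
      by (auto simp: psi_def)
    moreover have "finite ({p. E p \<noteq> 0} \<union> P ` {1..n})" using E(1) by (simp add: positive_divisor_def)
    ultimately have "finite {p. psi P n m (f, E) p \<noteq> 0}" by (rule finite_subset)
    then show ?thesis using nn by (simp add: positive_divisor_def)
  qed
  have bij: "bij_betw \<Phi> U (Sigma F G)"
  proof (rule bij_betw_byWitness[where f' = "psi P n m"])
    show "\<forall>D\<in>U. psi P n m (\<Phi> D) = D"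
    proof
      fix D assume "D \<in> U"
      then have nn: "0 \<le> D p" for p by (simp add: U_def U_set_def positive_divisor_def)
      show "psi P n m (\<Phi> D) = D"
      proof
        fix p show "psi P n m (\<Phi> D) p = D p"
        proof (cases "p \<in> P ` {1..n}")
          case True
          then obtain i where i: "i \<in> {1..n}" "p = P i" by auto
          then show ?thesis using vl_lab[OF nn[of "P i"], of m]
            by (simp add: \<Phi>_def psi_at[OF inj] prof_at red_at)
        next
          case False
          then show ?thesis by (simp add: \<Phi>_def psi_def red_def)
        qed
      qed
    qed
    show "\<forall>y\<in>Sigma F G. \<Phi> (psi P n m y) = y"
      using right by (auto simp: \<Phi>_def)
    show "\<Phi> ` U \<subseteq> Sigma F G"
    proof
      fix y assume "y \<in> \<Phi> ` U"
      then obtain D where D: "D \<in> U" "y = \<Phi> D" by auto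
      have Dp: "positive_divisor D" "div_deg deg D = int r" "div_deg deg (div_bar P n m D) = int t"
        "\<forall>l\<in>{1..m}. jcount P n m D l = j l" using D(1) by (auto simp: U_def U_set_def)
      let ?f = "prof P n m D"
      have cj: "\<forall>l\<in>{1..m}. card {i\<in>{1..n}. ?f i = l + 1} = j l" using Dp(4) jc[OF Dp(1)] by simp
      have "int t = int m * int n + int (card {i\<in>{1..n}. ?f i = 1}) - int w"
        using bar_deg[OF inj deg1 Dp(1), of m] Dp(3) cnt[OF cj] by simp
      then have cK: "card {i\<in>{1..n}. ?f i = 1} = K" using Kint by linarith
      have "?f \<in> F"
      proof -
        have "card {i\<in>{1..n}. ?f i = v} = c v" if v: "v \<in> {1..m+1}" for v
        proof (cases "v = 1")
          case True then show ?thesis using cK by (simp add: c_def)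
        next
          case False
          then have "v - 1 \<in> {1..m}" "v = (v - 1) + 1" using v by auto
          then show ?thesis using cj False by (metis c_def)
        qed
        then show ?thesis using prof_Pi[OF Dp(1)] by (simp add: F_def)
      qed
      moreover have "red P n m D \<in> G ?f"
      proof -
        have "div_deg deg (red P n m D) = int a"
          using deg_split[OF inj deg1 Dp(1), where m=m] Dp(2) Dp(3) cK Kint aint by simp
        then show ?thesis using red_pos[OF Dp(1)] red_1[OF Dp(1)] by (simp add: G_def)
      qed
      ultimately show "y \<in> Sigma F G" using D(2) by (simp add: \<Phi>_def)
    qed
    show "psi P n m ` Sigma F G \<subseteq> U"
    proof
      fix D assume "D \<in> psi P n m ` Sigma F G"
      then obtain f E where fE: "(f, E) \<in> Sigma F G" "D = psi P n m (f, E)" by auto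
      have Dpos: "positive_divisor D" using psi_pos[OF fE(1)] fE(2) by simp
      have pf: "prof P n m D = f" and rE: "red P n m D = E" using right[OF fE(1)] fE(2) by auto
      have fF: "\<forall>v\<in>{1..m+1}. card {i\<in>{1..n}. f i = v} = c v" using fE(1) by (simp add: F_def)
      have cj: "\<forall>l\<in>{1..m}. card {i\<in>{1..n}. f i = l + 1} = j l"
      proof
        fix l assume l: "l \<in> {1..m}"
        then have "l + 1 \<in> {1..m+1}" "l + 1 \<noteq> 1" by auto
        then show "card {i\<in>{1..n}. f i = l + 1} = j l" using fF by (simp add: c_def)
      qed
      have c1: "card {i\<in>{1..n}. f i = 1} = K" using fF by (simp add: c_def)
      have Edeg: "div_deg deg E = int a" using fE(1) by (simp add: G_def)
      have bt: "div_deg deg (div_bar P n m D) = int t"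
        using bar_deg[OF inj deg1 Dpos, of m] pf cnt[OF cj] c1 Kint by simp
      have dr: "div_deg deg D = int r"
        using deg_split[OF inj deg1 Dpos, where m=m] pf rE bt c1 Edeg Kint aint by simp
      have "\<forall>l\<in>{1..m}. jcount P n m D l = j l" using jc[OF Dpos] pf cj by simp
      then show "D \<in> U" using Dpos bt dr by (simp add: U_def U_set_def)
    qed
  qed
  have finF: "finite F"
    by (rule finite_subset[of _ "{1..n} \<rightarrow>\<^sub>E {0..m+1}"]) (auto simp: F_def intro: finite_PiE)
  have finG: "finite (G f)" for f
    by (rule finite_subset[OF _ fin_divs[OF deg_pos fin_deg, of a]]) (auto simp: G_def)
  have cardG: "card (G f) = C_num deg P n a K" if "f \<in> F" for f
  proof -
    have "card {i\<in>{1..n}. f i = 1} = K" using that by (simp add: F_def c_def)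
    moreover have "card (G f) = C_num deg P n a (card {i\<in>{1..n}. f i = 1})"
      unfolding G_def by (rule perm_G[OF inj deg1]) auto
    ultimately show ?thesis by simp
  qed
  have "card U = card (Sigma F G)" using bij by (rule bij_betw_same_card)
  also have "\<dots> = (\<Sum>f\<in>F. card (G f))" using finF finG by simp
  also have "\<dots> = card F * C_num deg P n a K" using cardG by simp
  finally have cU: "card U = card F * C_num deg P n a K" .
  have "card F = (\<Prod>v=1..m+1. (card {1..n} - (\<Sum>u=v+1..m+1. c u)) choose c v)"
    unfolding F_def by (rule count_funs) simp
  also have "\<dots> = ((n - (\<Sum>u=2..m+1. c u)) choose c 1) * (\<Prod>v=2..m+1. (n - (\<Sum>u=v+1..m+1. c u)) choose c v)"
    by (simp add: prod.atLeast_Suc_atMost numeral_2_eq_2)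
  also have "(\<Sum>u=2..m+1. c u) = (\<Sum>k=1..m. j k)"
    using sum.shift_bounds_cl_Suc_ivl[of c 1 m] by (simp add: c_def numeral_2_eq_2)
  also have "(\<Prod>v=2..m+1. (n - (\<Sum>u=v+1..m+1. c u)) choose c v)
      = (\<Prod>l=1..m. (n - (\<Sum>u=l+2..m+1. c u)) choose c (l + 1))"
    using prod.shift_bounds_cl_Suc_ivl[of "\<lambda>v. (n - (\<Sum>u=v+1..m+1. c u)) choose c v" 1 m]
    by (simp add: numeral_2_eq_2)
  also have "\<dots> = (\<Prod>l=1..m. (n - (\<Sum>k=l+1..m. j k)) choose j l)"
  proof (rule prod.cong)
    fix l assume l: "l \<in> {1..m}"
    have cl: "c (l + 1) = j l" using l by (simp add: c_def)
    have "(\<Sum>u=l+2..m+1. c u) = (\<Sum>k=l+1..m. c (Suc k))"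
      using sum.shift_bounds_cl_Suc_ivl[of c "l+1" m] by simp
    also have "\<dots> = (\<Sum>k=l+1..m. j k)" by (simp add: c_def)
    finally show "(n - (\<Sum>u=l+2..m+1. c u)) choose c (l + 1) = (n - (\<Sum>k=l+1..m. j k)) choose j l"
      by (simp only: cl)
  qed simp
  finally have cF: "card F = ((n - (\<Sum>k=1..m. j k)) choose K) * (\<Prod>l=1..m. (n - (\<Sum>k=l+1..m. j k)) choose j l)"
    by (simp add: c_def)
  show ?thesis using cU cF by (simp add: U_def K_def a_def w_def)
qed


end
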